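(* Let $\alpha>0$ be a constant and let $n$ be an integer with $n\ge 10+4\alpha$. Then the solution curve of the generalized Gelfand problem \[ u''+\frac{n-1}{r}u'+\lambda r^{\alpha}e^{u}=0 \quad (0<r<1), \qquad u'(0)=0,\quad u(1)=0, \] admits at most two turns. That is, with $w$ and $\lambda(t)$ as in the context, $\lambda'(t)$ changes sign at most twice on $(0,\infty)$.
   Context: Here $\lambda>0$ is a parameter. Let $w(t)$ be the solution of the initial value problem \[ w''+\frac{n-1}{t}w'+t^{\alpha}e^{w}=0, \qquad w(0)=0,\quad w'(0)=0 \qquad (t>0). \] This solution is negative and decreasing and is defined for all $t>0$. For each $t>0$, the function $u(r)=w(tr)-w(t)$ solves the boundary value problem with $\lambda=\lambda(t):=t^{\alpha+2}e^{w(t)}$, and all solutions arise in this way. The solution curve is the parametrized curve \[ t\mapsto(\lambda,u(0))=\bigl(t^{\alpha+2}e^{w(t)},\,-w(t)\bigr), \qquad t\in(0,\infty). \] A turn of the curve is a change of sign of $\lambda'(t)$. *)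

theory Defs
  imports "HOL-Analysis.Analysis"
begin

definition gelfand_lambda :: "real \<Rightarrow> (real \<Rightarrow> real) \<Rightarrow> real \<Rightarrow> real" where
  "gelfand_lambda \<alpha> w t = t powr (\<alpha> + 2) * exp (w t)"

definition at_most_two_sign_changes :: "(real \<Rightarrow> real) \<Rightarrow> real set \<Rightarrow> bool" where
  "at_most_two_sign_changes f S \<longleftrightarrow>
     \<not> (\<exists>t1 t2 t3 t4. t1 \<in> S \<and> t2 \<in> S \<and> t3 \<in> S \<and> t4 \<in> S \<and>
          t1 < t2 \<and> t2 < t3 \<and> t3 < t4 \<and>
          f t1 * f t2 < 0 \<and> f t2 * f t3 < 0 \<and> f t3 * f t4 < 0)"

end

theory Submission
  imports Defs
begin

lemma first_le0:
  fixes f :: "real \<Rightarrow> real"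
  assumes "continuous_on {a..b} f" "f a > 0" "f b \<le> 0" "a \<le> b"
  shows "\<exists>c\<in>{a<..b}. f c = 0 \<and> (\<forall>x\<in>{a..<c}. f x > 0)"
proof -
  define K where "K = {x\<in>{a..b}. f x \<le> 0}"
  have "K = {a..b} \<inter> f -` {..0}" unfolding K_def by auto
  hence cl: "closed K" using continuous_closed_preimage[OF assms(1)] by simp
  have ne: "K \<noteq> {}" using assms unfolding K_def by auto
  have bb: "bdd_below K" unfolding K_def by (auto intro: bdd_belowI[of _ a])
  define c where "c = Inf K"
  have cK: "c \<in> K" using closed_contains_Inf[OF ne bb cl] c_def by simp
  have below: "\<forall>x\<in>{a..<c}. f x > 0"
  proof
    fix x assume x: "x \<in> {a..<c}"
    have "x \<notin> K" using x cInf_lower[OF _ bb] c_def by fastforce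
    moreover have "x \<le> b" using x cK K_def by auto
    ultimately show "f x > 0" using x unfolding K_def by auto
  qed
  have ca: "c \<noteq> a" using cK assms(2) K_def by auto
  hence ac: "a < c" using cK K_def by auto
  have "f c \<ge> 0"
  proof -
    have "(f \<longlongrightarrow> f c) (at c within {a..b})"
      using assms(1) cK K_def by (auto simp: continuous_on_def)
    hence "(f \<longlongrightarrow> f c) (at c within {a..<c})"
      by (rule tendsto_within_subset) (use cK K_def in auto)
    moreover have "at c within {a..<c} \<noteq> bot"
      using ac by (simp add: at_within_eq_bot_iff closure_atLeastLessThan)
    moreover have "eventually (\<lambda>x. f x \<ge> 0) (at c within {a..<c})"
      using below by (auto simp: eventually_at_filter less_imp_le)
    ultimately show ?thesis using tendsto_lowerbound by blast
  qed
  thus ?thesis using cK K_def below ac by force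
qed

lemma aux_ineq:
  fixes v y q N Q t a :: real
  assumes "0 \<le> q" "q \<le> Q" "N > 0" "0 < a" "a \<le> t"
  shows "(-2 * N *  v^2 + 2 * (q-1) *  v * y)/t + (2 * N+1+Q)/a  *  (v^2+y^2) \<ge> 0"
proof -
  have a1: "\<bar>2 *  v * y\<bar> \<le> v^2+y^2"
    using sum_squares_bound[of v y] sum_squares_bound[of v "-y"] by (auto simp: abs_if algebra_simps)
  have a2: "\<bar>q-1\<bar> \<le> 1+Q" using assms by auto
  have "\<bar>q-1\<bar> * \<bar>2 * v * y\<bar> \<le> (1+Q) * (v^2+y^2)"
    by (rule mult_mono[OF a2 a1]) (use assms in auto)
  hence "\<bar>(q-1) * (2 * v * y)\<bar> \<le> (1+Q) * (v^2+y^2)" by (simp add: abs_mult)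
  hence h1: "2 * (q-1) *  v * y \<ge> -(1+Q) * (v^2+y^2)" by (auto simp: algebra_simps abs_le_iff)
  define E where "E = v^2 + y^2"
  have E0: "E \<ge> 0" by (simp add: E_def)
  have vE: "v^2 \<le> E" by (simp add: E_def)
  have num: "-2 * N *  v^2 + 2 * (q-1) *  v * y \<ge> -(2 * N+1+Q) * E"
  proof -
    have h1': "2 * (q-1) *  v * y \<ge> -(1+Q) * E" using h1 unfolding E_def .
    have "2 * N * v^2 \<le> 2 * N * E" using vE assms(3) by simp
    moreover have "-(2 * N+1+Q) * E = - (2 * N * E) - (1+Q) * E" by (simp add: algebra_simps)
    ultimately show ?thesis using h1' by linarith
  qed
  let ?C = "2 * N+1+Q"
  have C0: "?C \<ge> 0" using assms by auto
  have "(-2 * N *  v^2 + 2 * (q-1) *  v * y)/t \<ge> -?C * E/t"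
    using num assms by (simp add: divide_right_mono)
  moreover have "-?C * E/t \<ge> -?C * E/a"
  proof -
    have "?C * E/t \<le> ?C * E/a" using C0 E0 assms
      by (intro divide_left_mono) auto
    hence "-(?C*E/t) \<ge> -(?C*E/a)" by linarith
    thus ?thesis by (metis minus_divide_left mult_minus_left)
  qed
  ultimately have "(-2 * N *  v^2 + 2 * (q-1) *  v * y)/t \<ge> -?C * E/a" by linarith
  moreover have "-?C * E/a = -(?C/a * E)" using assms(4) by (simp add: field_simps)
  ultimately show ?thesis unfolding E_def[symmetric] by linarith
qed

lemma deriv_le0_first:
  fixes f :: "real \<Rightarrow> real"
  assumes "DERIV f c :> D" "\<forall>x\<in>{a..<c}. f x > 0" "f c \<le> 0" "a < c"
  shows "D \<le> 0"
proof (rule ccontr)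
  assume "\<not> D \<le> 0"
  then obtain d where d: "d > 0" "\<forall>h>0. h < d \<longrightarrow> f (c - h) < f c"
    using DERIV_pos_inc_left[OF assms(1)] by force
  define h where "h = min (d/2) (c - a)"
  have "h > 0" "h < d" using d assms(4) by (auto simp: h_def)
  hence "f (c - h) < f c" using d by auto
  moreover have "c - h \<in> {a..<c}" using \<open>h>0\<close> by (auto simp: h_def)
  ultimately show False using assms by force
qed


theorem theorem3p2:
  fixes \<alpha> :: real and n :: nat and w w' w'' :: "real \<Rightarrow> real"
  assumes alpha_pos: "\<alpha> > 0"
    and n_ge: "real n \<ge> 10 + 4 * \<alpha>"
    and w_deriv: "\<And>t. t \<ge> 0 \<Longrightarrow> (w has_real_derivative w' t) (at t within {0..})"
    and w'_cont: "continuous_on {0..} w'"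
    and w'_deriv: "\<And>t. t > 0 \<Longrightarrow> (w' has_real_derivative w'' t) (at t)"
    and ode: "\<And>t. t > 0 \<Longrightarrow> w'' t + (real n - 1) / t * w' t + t powr \<alpha> * exp (w t) = 0"
    and w0: "w 0 = 0"
    and w'0: "w' 0 = 0"
  shows "at_most_two_sign_changes (deriv (gelfand_lambda \<alpha> w)) {0<..}"
proof -
  define N where "N = real n - 2"
  define Q where "Q = N * (\<alpha> + 2)"
  define q where "q = (\<lambda>t. t powr (\<alpha> + 2) * exp (w t))"
  define v where "v = (\<lambda>t. t * w' t + \<alpha> + 2)"
  define D where "D = N^2 - 4 * Q"
  define k where "k = (N - sqrt D) / 2"
  have Npos: "N > 0" using n_ge alpha_pos by (simp add: N_def)
  have Qpos: "Q > 0" using Npos alpha_pos by (simp add: Q_def)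
  have Dnn: "D \<ge> 0"
  proof -
    have "D = N * (N - 4*\<alpha> - 8)" by (simp add: D_def Q_def power2_eq_square algebra_simps)
    moreover have "N - 4*\<alpha> - 8 \<ge> 0" using n_ge by (simp add: N_def)
    ultimately show ?thesis using Npos by simp
  qed
  have sD: "sqrt D ^ 2 = D" using Dnn by simp
  have sD0: "sqrt D \<ge> 0" using Dnn by simp
  have sDN: "sqrt D < N"
  proof -
    have "D < N^2" using Qpos by (simp add: D_def)
    thus ?thesis using Npos real_sqrt_less_iff[of D "N^2"] by simp
  qed
  have kpos: "k > 0" using sDN by (simp add: k_def)
  have kN: "k < N"
  proof -
    have "N - sqrt D < 2 * N" using sD0 Npos by linarith
    thus ?thesis unfolding k_def by (simp add: field_simps)
  qed
  have kroot: "k^2 - N * k + Q = 0"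
    using sD by (simp add: k_def D_def power2_eq_square field_simps)
  have dw: "(w has_real_derivative w' t) (at t)" if "t > 0" for t
  proof -
    have "at t within {0..} = at t" using that by (intro at_within_interior) simp
    thus ?thesis using w_deriv[of t] that by simp
  qed
  have dq: "(q has_real_derivative q t * v t / t) (at t)" if t: "t > 0" for t
  proof -
    have "(q has_real_derivative ((\<alpha>+2) * t powr (\<alpha> + 2 - 1) * exp (w t) + t powr (\<alpha>+2) * (exp (w t) * w' t))) (at t)"
      unfolding q_def
      using DERIV_mult[OF has_real_derivative_powr[OF t, of "\<alpha>+2"] DERIV_chain2[OF DERIV_exp dw[OF t]]] by (simp add: algebra_simps)
    moreover have "(\<alpha>+2) * t powr (\<alpha> + 2 - 1) * exp (w t) + t powr (\<alpha>+2) * (exp (w t) * w' t) = q t * v t / t"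
    proof -
      have p: "t powr (\<alpha> + 2) = t powr (\<alpha> + 1) * t"
        using t powr_add[of t "\<alpha>+1" 1] by (simp add: add.assoc)
      show ?thesis using t by (simp add: q_def v_def p field_simps)
    qed
    ultimately show ?thesis by simp
  qed
  have dv: "(v has_real_derivative (- N * v t + Q - q t) / t) (at t)" if t: "t > 0" for t
  proof -
    have "(v has_real_derivative (1 * w' t + t * w'' t)) (at t)"
      unfolding v_def
      using DERIV_add[OF DERIV_add[OF DERIV_mult[OF DERIV_ident w'_deriv[OF t]] DERIV_const[of \<alpha>]] DERIV_const[of 2]] by (simp add: mult.commute)
    moreover have "1 * w' t + t * w'' t = (- N * v t + Q - q t) / t"
    proof -
      have e: "w'' t = - (real n - 1) / t * w' t - t powr \<alpha> * exp (w t)" using ode[OF t] by linarith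
      have "t powr (\<alpha> + 2) = t * t * t powr \<alpha>" using t by (simp add: powr_add power2_eq_square)
      thus ?thesis using t unfolding e by (simp add: q_def v_def N_def Q_def field_simps)
    qed
    ultimately show ?thesis by simp
  qed
  define \<phi> where "\<phi> = (\<lambda>t. q t - Q + k * v t)"
  have d\<phi>: "(\<phi> has_real_derivative (q t * v t / t + k * ((- N * v t + Q - q t) / t))) (at t)"
    if t: "t > 0" for t
    unfolding \<phi>_def using DERIV_add[OF DERIV_diff[OF dq[OF t] DERIV_const] DERIV_cmult[OF dv[OF t]]]
    by simp
  have cont: "continuous_on {a..b} f" if "a > 0" "\<And>t. t > 0 \<Longrightarrow> (f has_real_derivative f' t) (at t)"
    for a b and f f' :: "real \<Rightarrow> real"
  proof (rule continuous_at_imp_continuous_on, rule ballI)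
    fix x assume "x \<in> {a..b}"
    hence "x > 0" using that(1) by auto
    thus "isCont f x" using that(2) DERIV_isCont by blast
  qed
  have qnn: "q t \<ge> 0" for t by (simp add: q_def)
  have lim_w': "(w' \<longlongrightarrow> 0) (at_right 0)"
  proof -
    have "(w' \<longlongrightarrow> w' 0) (at 0 within {0..})"
      using w'_cont by (simp add: continuous_on_def)
    hence "(w' \<longlongrightarrow> w' 0) (at 0 within {0<..})"
      by (rule tendsto_within_subset) auto
    thus ?thesis using w'0 by simp
  qed
  have lim_w: "(w \<longlongrightarrow> 0) (at_right 0)"
  proof -
    have "continuous (at 0 within {0..}) w" using DERIV_continuous[OF w_deriv[of 0]] by simp
    hence "(w \<longlongrightarrow> w 0) (at 0 within {0..})" by (simp add: continuous_within)
    hence "(w \<longlongrightarrow> w 0) (at 0 within {0<..})"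
      by (rule tendsto_within_subset) auto
    thus ?thesis using w0 by simp
  qed
  have lim_v: "(v \<longlongrightarrow> \<alpha> + 2) (at_right 0)"
  proof -
    have "((\<lambda>t. t * w' t + \<alpha> + 2) \<longlongrightarrow> 0 * 0 + \<alpha> + 2) (at_right 0)"
      by (intro tendsto_intros lim_w')
    thus ?thesis by (simp add: v_def)
  qed
  have lim_q: "(q \<longlongrightarrow> 0) (at_right 0)"
  proof -
    have "((\<lambda>t. t powr (\<alpha> + 2)) \<longlongrightarrow> 0) (at_right 0)"
      by (rule tendsto_zero_powrI) (auto intro: tendsto_ident_at eventually_at_rightI[of 0 1] simp: alpha_pos add_pos_pos)
    hence "((\<lambda>t. t powr (\<alpha> + 2) * exp (w t)) \<longlongrightarrow> 0 * exp 0) (at_right 0)"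
      by (intro tendsto_intros lim_w)
    thus ?thesis by (simp add: q_def)
  qed
  have lim_\<phi>: "(\<phi> \<longlongrightarrow> 0 - Q + k * (\<alpha> + 2)) (at_right 0)"
    unfolding \<phi>_def by (intro tendsto_intros lim_q lim_v)
  have neg: "0 - Q + k * (\<alpha> + 2) < 0"
    using kN alpha_pos by (simp add: Q_def)
  have ev: "eventually (\<lambda>t. v t > 0 \<and> \<phi> t < 0) (at_right 0)"
    using order_tendstoD(1)[OF lim_v, of 0] order_tendstoD(2)[OF lim_\<phi> neg] alpha_pos
    by (auto elim: eventually_elim2)
  have vpos: "v t > 0" if t: "t > 0" for t
  proof (rule ccontr)
    assume "\<not> v t > 0"
    hence vt: "v t \<le> 0" by simp
    obtain b where b: "b > 0" "\<forall>y>0. y < b \<longrightarrow> v y > 0 \<and> \<phi> y < 0"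
      using ev unfolding eventually_at_right_field by auto
    define a where "a = min (b/2) (t/2)"
    have a: "a > 0" "a < t" "v a > 0" "\<phi> a < 0" using b t by (auto simp: a_def)
    obtain c where c: "c \<in> {a<..t}" "v c = 0" "\<forall>x\<in>{a..<c}. v x > 0"
      using first_le0[OF cont[OF a(1) dv] a(3) vt] a by auto
    have c0: "c > 0" using c a by auto
    have "(- N * v c + Q - q c) / c \<le> 0"
      by (rule deriv_le0_first[OF dv[OF c0] c(3)]) (use c in auto)
    hence qc: "q c \<ge> Q" using c c0 by (simp add: divide_le_0_iff)
    have cm: "continuous_on {a..c} (\<lambda>x. - \<phi> x)"
      by (intro continuous_intros cont[OF a(1) d\<phi>])
    obtain c2 where c2: "c2 \<in> {a<..c}" "- \<phi> c2 = 0" "\<forall>x\<in>{a..<c2}. - \<phi> x > 0"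
      using first_le0[OF cm] a c qc by (auto simp: \<phi>_def)
    have c20: "c2 > 0" using c2 a by auto
    have "- (q c2 * v c2 / c2 + k * ((- N * v c2 + Q - q c2) / c2)) \<le> 0"
      by (rule deriv_le0_first[OF DERIV_minus[OF d\<phi>[OF c20]] c2(3)]) (use c2 in auto)
    moreover have "q c2 = Q - k * v c2" using c2(2) by (simp add: \<phi>_def)
    ultimately have "k * (v c2)^2 / c2 \<le> 0"
    proof -
      assume h: "- (q c2 * v c2 / c2 + k * ((- N * v c2 + Q - q c2) / c2)) \<le> 0"
        and qe: "q c2 = Q - k * v c2"
      have "q c2 * v c2 / c2 + k * ((- N * v c2 + Q - q c2) / c2)
          = (v c2 * (k^2 - N * k + Q) - k * (v c2)^2) / c2"
        unfolding qe using c20 by (simp add: field_simps power2_eq_square)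
      also have "\<dots> = - (k * (v c2)^2 / c2)" using kroot by simp
      finally show ?thesis using h by simp
    qed
    hence "v c2 = 0" using kpos c20
      by (metis divide_pos_pos mult_pos_pos not_le zero_less_power2)
    hence c2c: "c2 = c"
    proof -
      assume v0: "v c2 = 0"
      { assume "c2 \<noteq> c"
        hence "c2 \<in> {a..<c}" using c2(1) by auto
        hence False using c(3) v0 by fastforce }
      thus ?thesis by blast
    qed
    hence qQ: "q c = Q" using c2 c by (simp add: \<phi>_def)
    \<comment> \<open>the trajectory cannot reach the equilibrium in finite time\<close>
    have qle: "q x \<le> Q" if xin: "x \<in> {a..c}" for x
    proof -
      have der: "\<exists>d. DERIV q y :> d \<and> d \<ge> 0" if y: "x \<le> y" "y \<le> c" for y
      proof -
        have y0: "y > 0" using y xin a by auto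
        have "v y \<ge> 0" using c y xin by (cases "y = c") (auto intro: less_imp_le)
        thus "\<exists>d. (q has_real_derivative d) (at y) \<and> d \<ge> 0"
          using dq[OF y0] qnn[of y] y0 by auto
      qed
      have "q x \<le> q c" using DERIV_nonneg_imp_nondecreasing[of x c q] der xin by auto
      thus ?thesis using qQ by simp
    qed
    define C where "C = 2*N+1+Q"
    define G where "G = (\<lambda>x. ((v x)^2 + (q x - Q)^2) * exp (C / a * x))"
    have derG: "\<exists>d. DERIV G x :> d \<and> d \<ge> 0" if x: "a \<le> x" "x \<le> c" for x
    proof -
      have x0: "x > 0" using x a by auto
      define E' where "E' = 2 * v x * ((- N * v x + Q - q x) / x) + 2 * (q x - Q) * (q x * v x / x)"
      have dE: "((\<lambda>x. (v x)^2 + (q x - Q)^2) has_real_derivative E') (at x)"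
        unfolding E'_def
        by (rule DERIV_cong[OF DERIV_add[OF DERIV_power[OF dv[OF x0], of 2] DERIV_power[OF DERIV_diff[OF dq[OF x0] DERIV_const[of Q]], of 2]]])
          (use x0 in \<open>simp add: field_simps\<close>)
      have dG: "(G has_real_derivative (E' * exp (C / a * x) + ((v x)^2 + (q x - Q)^2) * (exp (C / a * x) * (C / a)))) (at x)"
        unfolding G_def
        by (rule DERIV_cong[OF DERIV_mult[OF dE DERIV_chain2[OF DERIV_exp DERIV_cmult[OF DERIV_ident, of "C/a"]]]]) simp
      have eqE: "E' = (-2 * N * (v x)^2 + 2 * (q x - 1) * v x * (q x - Q))/x"
        unfolding E'_def using x0 by (simp add: field_simps power2_eq_square)
      have ineq: "E' + C / a * ((v x)^2 + (q x - Q)^2) \<ge> 0"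
        unfolding eqE C_def by (rule aux_ineq[OF qnn qle Npos a(1) x(1)]) (use x in auto)
      have "E' * exp (C / a * x) + ((v x)^2 + (q x - Q)^2) * (exp (C / a * x) * (C / a))
          = exp (C / a * x) * (E' + C / a * ((v x)^2 + (q x - Q)^2))"
        by (simp add: algebra_simps)
      hence "E' * exp (C / a * x) + ((v x)^2 + (q x - Q)^2) * (exp (C / a * x) * (C / a)) \<ge> 0"
        using ineq by simp
      thus "\<exists>d. (G has_real_derivative d) (at x) \<and> d \<ge> 0" using dG by blast
    qed
    have "G a \<le> G c" using DERIV_nonneg_imp_nondecreasing[of a c G] derG c by auto
    moreover have "G c = 0" using c qQ by (simp add: G_def)
    moreover have "G a > 0" using a by (simp add: G_def add_pos_nonneg)
    ultimately show False by simp
  qed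
  have lam: "gelfand_lambda \<alpha> w = q" by (simp add: fun_eq_iff gelfand_lambda_def q_def)
  have dpos: "deriv (gelfand_lambda \<alpha> w) t > 0" if t: "t > 0" for t
  proof -
    have "deriv (gelfand_lambda \<alpha> w) t = q t * v t / t"
      unfolding lam by (rule DERIV_imp_deriv[OF dq[OF t]])
    moreover have "q t > 0" using t by (simp add: q_def)
    ultimately show ?thesis using vpos[OF t] t by simp
  qed
  show ?thesis unfolding at_most_two_sign_changes_def
  proof
    assume "\<exists>t1 t2 t3 t4. t1 \<in> {0<..} \<and> t2 \<in> {0<..} \<and> t3 \<in> {0<..} \<and> t4 \<in> {0<..} \<and>
          t1 < t2 \<and> t2 < t3 \<and> t3 < t4 \<and>
          deriv (gelfand_lambda \<alpha> w) t1 * deriv (gelfand_lambda \<alpha> w) t2 < 0 \<and>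
          deriv (gelfand_lambda \<alpha> w) t2 * deriv (gelfand_lambda \<alpha> w) t3 < 0 \<and>
          deriv (gelfand_lambda \<alpha> w) t3 * deriv (gelfand_lambda \<alpha> w) t4 < 0"
    then obtain t1 t2 where "t1 > 0" "t2 > 0"
      "deriv (gelfand_lambda \<alpha> w) t1 * deriv (gelfand_lambda \<alpha> w) t2 < 0" by auto
    thus False using dpos[of t1] dpos[of t2] by (metis mult_pos_pos not_less_iff_gr_or_eq)
  qed
qed

end
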